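(* Let $n\ge 1$, let $p\in[1,\infty]$, and let $0\le x_0\le x_1\le\dots\le x_{n-1}<1$ and $0\le y_0\le y_1\le\dots\le y_{n-1}<1$ be real numbers. Let $\tilde y_j = y_{j \bmod n} + \lfloor j/n\rfloor$ for all $j\in\mathbb Z$ (the periodic unrolling of $\vec y$ onto the real line). Then the optimal value of the circular problem $$\min_{c\in[0,1),\ s\in\{0,\dots,n-1\}} \Big\| \big( d^\circ((x_i+c)\bmod 1,\ y_{(i+s)\bmod n}) \big)_{i=0}^{n-1} \Big\|_p$$ equals the optimal value of the linear problem $$\inf_{c\in\mathbb R,\ s\in\mathbb Z} \Big\| \big( |x_i+c-\tilde y_{i+s}| \big)_{i=0}^{n-1} \Big\|_p .$$
   Context: For $a,b\in[0,1)$, the circular distance is $d^\circ(a,b)=\min\{|a-b|,\,1-|a-b|\}$. $\|\cdot\|_p$ denotes the $\ell_p$ norm of a vector in $\mathbb R^n$ (the maximum of absolute values when $p=\infty$). *)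

theory Defs
  imports Complex_Main "HOL-Library.Extended_Real"
begin

definition circ_dist :: "real \<Rightarrow> real \<Rightarrow> real" where
  "circ_dist a b = min \<bar>a - b\<bar> (1 - \<bar>a - b\<bar>)"

definition lp_norm :: "ereal \<Rightarrow> nat \<Rightarrow> (nat \<Rightarrow> real) \<Rightarrow> real" where
  "lp_norm p n v =
     (if p = \<infinity> then Max ((\<lambda>i. \<bar>v i\<bar>) ` {0..<n})
      else (\<Sum>i<n. \<bar>v i\<bar> powr real_of_ereal p) powr (1 / real_of_ereal p))"

definition ytilde :: "nat \<Rightarrow> (nat \<Rightarrow> real) \<Rightarrow> int \<Rightarrow> real" where
  "ytilde n y j = y (nat (j mod int n)) + of_int (j div int n)"

end

theory Submission
  imports Defs "HOL-Analysis.Analysis"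
begin

lemma powr_le_self_small:
  fixes t b q :: real assumes "0 \<le> t" "t \<le> 1" "q \<ge> 1" "0 \<le> b"
  shows "(t * b) powr q \<le> t * b powr q"
proof -
  have "(t*b) powr q = t powr q * b powr q" using assms by (simp add: powr_mult)
  moreover have "t powr q \<le> t" 
    by (metis assms(1) assms(3) assms(2) powr_one_gt_zero_iff powr_mono')
  ultimately show ?thesis using assms(4) by (simp add: mult_right_mono)
qed

lemma conv_abs:
  fixes x y t q :: real assumes t: "0 \<le> t" "t \<le> 1" and q: "q \<ge> 1"
  shows "\<bar>(1-t)*x + t*y\<bar> powr q \<le> (1-t)*\<bar>x\<bar> powr q + t*\<bar>y\<bar> powr q"
proof -
  have "\<bar>(1-t)*x+t*y\<bar> \<le> \<bar>(1-t)*x\<bar> + \<bar>t*y\<bar>" by (rule abs_triangle_ineq)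
  also have "\<dots> = (1-t)*\<bar>x\<bar> + t*\<bar>y\<bar>" using t by (simp add: abs_mult)
  finally have h1: "\<bar>(1-t)*x+t*y\<bar> \<le> (1-t)*\<bar>x\<bar> + t*\<bar>y\<bar>" .
  have h2: "((1-t)*\<bar>x\<bar> + t*\<bar>y\<bar>) powr q \<le> (1-t)*\<bar>x\<bar> powr q + t*\<bar>y\<bar> powr q"
  proof (cases "x = 0")
    case True
    then show ?thesis using powr_le_self_small[where t=t and b="\<bar>y\<bar>" and q=q] t q by simp
  next
    case x: False
    show ?thesis
    proof (cases "y = 0")
      case True
      then show ?thesis using powr_le_self_small[where t="1-t" and b="\<bar>x\<bar>" and q=q] t q by simp
    next
      case False
      have "\<bar>x\<bar> \<in> {0<..}" "\<bar>y\<bar> \<in> {0<..}" using x False by auto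
      from convex_onD[OF powr_convex[OF q] t this]
      show ?thesis by simp
    qed
  qed
  have "\<bar>(1-t)*x+t*y\<bar> powr q \<le> ((1-t)*\<bar>x\<bar> + t*\<bar>y\<bar>) powr q"
    using h1 q by (intro powr_mono2) auto
  with h2 show ?thesis by linarith
qed

lemma key_pair:
  fixes d1 d2 u w q :: real assumes "d1 \<le> u" "u \<le> d2" "w = d1 + d2 - u" "q \<ge> 1"
  shows "\<bar>u\<bar> powr q + \<bar>w\<bar> powr q \<le> \<bar>d1\<bar> powr q + \<bar>d2\<bar> powr q"
proof (cases "d1 = d2")
  case True
  then have "u = d1" "w = d1" using assms by auto
  then show ?thesis using True by simp
next
  case False
  then have lt: "d1 < d2" using assms by auto
  define t where "t = (u - d1) / (d2 - d1)"
  have t0: "0 \<le> t" "t \<le> 1" using assms lt by (auto simp: t_def field_simps)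
  have tt: "t*(d2-d1) = u - d1" using lt by (simp add: t_def)
  have u: "u = (1-t)*d1 + t*d2" using tt by (simp add: algebra_simps)
  have w: "w = (1-(1-t))*d1 + (1-t)*d2" using tt assms(3) by (simp add: algebra_simps)
  have A: "\<bar>u\<bar> powr q \<le> (1-t)*\<bar>d1\<bar> powr q + t*\<bar>d2\<bar> powr q"
    unfolding u using conv_abs[OF t0 assms(4)] .
  have B: "\<bar>w\<bar> powr q \<le> (1-(1-t))*\<bar>d1\<bar> powr q + (1-t)*\<bar>d2\<bar> powr q"
    unfolding w using conv_abs[of "1-t" q d1 d2] t0 assms(4) by simp
  from A B show ?thesis by (simp add: algebra_simps)
qed

lemma lp_swap:
  assumes p: "1 \<le> p" and ij: "i<n" "j<n" "i\<noteq>j" and ab: "aa \<le> bb" "B \<le> A"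
   and w: "w i = aa - A" "w j = bb - B" "w' i = aa - B" "w' j = bb - A"
   and rest: "\<And>k. k\<noteq>i \<Longrightarrow> k\<noteq>j \<Longrightarrow> w' k = w k"
  shows "lp_norm p n w' \<le> lp_norm p n w"
proof (cases "p = \<infinity>")
  case True
  have fin: "finite ((\<lambda>i. \<bar>w i\<bar>) ` {0..<n})" "(\<lambda>i. \<bar>w i\<bar>) ` {0..<n} \<noteq> {}" using ij by auto
  have fin': "finite ((\<lambda>i. \<bar>w' i\<bar>) ` {0..<n})" "(\<lambda>i. \<bar>w' i\<bar>) ` {0..<n} \<noteq> {}" using ij by auto
  have "\<forall>k\<in>{0..<n}. \<exists>l\<in>{0..<n}. \<bar>w' k\<bar> \<le> \<bar>w l\<bar>"
  proof
    fix k assume k: "k \<in> {0..<n}"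
    show "\<exists>l\<in>{0..<n}. \<bar>w' k\<bar> \<le> \<bar>w l\<bar>"
    proof (cases "k = i")
      case True
      have "\<bar>w' k\<bar> \<le> \<bar>w i\<bar> \<or> \<bar>w' k\<bar> \<le> \<bar>w j\<bar>" using True w ab by auto
      then show ?thesis using ij by auto
    next
      case ki: False
      show ?thesis
      proof (cases "k = j")
        case True
        have "\<bar>w' k\<bar> \<le> \<bar>w i\<bar> \<or> \<bar>w' k\<bar> \<le> \<bar>w j\<bar>" using True w ab by auto
        then show ?thesis using ij by auto
      next
        case False
        then show ?thesis using k ki rest by auto
      qed
    qed
  qed
  moreover have M: "\<And>l. l \<in> {0..<n} \<Longrightarrow> \<bar>w l\<bar> \<le> Max ((\<lambda>i. \<bar>w i\<bar>) ` {0..<n})"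
    using fin(1) by (intro Max_ge) auto
  ultimately have "\<forall>k\<in>{0..<n}. \<bar>w' k\<bar> \<le> Max ((\<lambda>i. \<bar>w i\<bar>) ` {0..<n})"
    by (meson order_trans)
  then have "Max ((\<lambda>i. \<bar>w' i\<bar>) ` {0..<n}) \<le> Max ((\<lambda>i. \<bar>w i\<bar>) ` {0..<n})"
    using fin' by (subst Max_le_iff) auto
  then show ?thesis unfolding lp_norm_def using True by simp
next
  case False
  obtain q where pq: "p = ereal q" using p False by (cases p) auto
  have q: "q \<ge> 1" using p pq by simp
  let ?f = "\<lambda>k. \<bar>w k\<bar> powr q" and ?g = "\<lambda>k. \<bar>w' k\<bar> powr q"
  have S: "\<And>h. sum h {..<n} = h i + h j + sum h ({..<n} - {i} - {j})"
    using ij by (simp add: sum.remove[of "{..<n}" i] sum.remove[of "{..<n} - {i}" j] algebra_simps)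
  have r: "sum ?g ({..<n} - {i} - {j}) = sum ?f ({..<n} - {i} - {j})"
    by (rule sum.cong) (auto simp: rest)
  have pair: "?g i + ?g j \<le> ?f i + ?f j"
    using key_pair[of "aa - A" "aa - B" "bb - B" "bb - A" q] ab q w by simp
  have "sum ?g {..<n} \<le> sum ?f {..<n}" using S[of ?g] S[of ?f] r pair by linarith
  then have "(sum ?g {..<n}) powr (1/q) \<le> (sum ?f {..<n}) powr (1/q)"
    using q by (intro powr_mono2) (auto intro: sum_nonneg)
  then show ?thesis unfolding lp_norm_def using False pq by simp
qed

lemma lp_norm_cong:
  assumes "\<And>i. i < n \<Longrightarrow> \<bar>f i\<bar> = \<bar>g i\<bar>"
  shows "lp_norm p n f = lp_norm p n g"
proof -
  have "(\<lambda>i. \<bar>f i\<bar>) ` {0..<n} = (\<lambda>i. \<bar>g i\<bar>) ` {0..<n}" using assms by auto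
  moreover have "(\<Sum>i<n. \<bar>f i\<bar> powr real_of_ereal p) = (\<Sum>i<n. \<bar>g i\<bar> powr real_of_ereal p)"
    using assms by (intro sum.cong) auto
  ultimately show ?thesis unfolding lp_norm_def by simp
qed

lemma lp_norm_mono:
  assumes p: "1 \<le> p" and le: "\<And>i. i < n \<Longrightarrow> \<bar>f i\<bar> \<le> \<bar>g i\<bar>"
  shows "lp_norm p n f \<le> lp_norm p n g"
proof (cases "p = \<infinity>")
  case True
  show ?thesis
  proof (cases "n = 0")
    case True
    then show ?thesis by (simp add: lp_norm_def)
  next
    case False
    have fin: "finite ((\<lambda>i. \<bar>g i\<bar>) ` {0..<n})" by auto
    have fin': "finite ((\<lambda>i. \<bar>f i\<bar>) ` {0..<n})" "(\<lambda>i. \<bar>f i\<bar>) ` {0..<n} \<noteq> {}" using False by auto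
    have M: "\<And>l. l \<in> {0..<n} \<Longrightarrow> \<bar>g l\<bar> \<le> Max ((\<lambda>i. \<bar>g i\<bar>) ` {0..<n})"
      using fin by (intro Max_ge) auto
    have "\<forall>k\<in>{0..<n}. \<bar>f k\<bar> \<le> Max ((\<lambda>i. \<bar>g i\<bar>) ` {0..<n})"
      using M le by (meson atLeastLessThan_iff order_trans)
    then have "Max ((\<lambda>i. \<bar>f i\<bar>) ` {0..<n}) \<le> Max ((\<lambda>i. \<bar>g i\<bar>) ` {0..<n})"
      using fin' by (subst Max_le_iff) auto
    then show ?thesis unfolding lp_norm_def using True by simp
  qed
next
  case False
  obtain q where pq: "p = ereal q" using p False by (cases p) auto
  have q: "q \<ge> 1" using p pq by simp
  have "(\<Sum>i<n. \<bar>f i\<bar> powr q) \<le> (\<Sum>i<n. \<bar>g i\<bar> powr q)"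
    using le q by (intro sum_mono powr_mono2) auto
  then have "(\<Sum>i<n. \<bar>f i\<bar> powr q) powr (1/q) \<le> (\<Sum>i<n. \<bar>g i\<bar> powr q) powr (1/q)"
    using q by (intro powr_mono2) (auto intro: sum_nonneg)
  then show ?thesis unfolding lp_norm_def using False pq by simp
qed

lemma lp_norm_nonneg: assumes "n \<ge> 1" shows "0 \<le> lp_norm p n f"
proof (cases "p = \<infinity>")
  case True
  then have "\<bar>f 0\<bar> \<le> Max ((\<lambda>i. \<bar>f i\<bar>) ` {0..<n})" using assms by (intro Max_ge) auto
  then show ?thesis using True unfolding lp_norm_def by (smt (verit))
next
  case False
  then show ?thesis unfolding lp_norm_def by auto
qed

lemma yt_formula:
  assumes "r < n" shows "ytilde n y (int r + int n * q) = y r + of_int q"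
proof -
  have n: "int n > 0" using assms by simp
  have "(int r + int n * q) mod int n = int r" using assms by simp
  moreover have "(int r + int n * q) div int n = q" using assms n by simp
  ultimately show ?thesis unfolding ytilde_def by simp
qed

lemma yt_decomp:
  assumes "n \<ge> 1" shows "t = int (nat (t mod int n)) + int n * (t div int n)" "nat (t mod int n) < n"
  using assms by (auto simp: nat_less_iff)

lemma yt_period:
  assumes "n \<ge> 1" shows "ytilde n y (t + int n) = ytilde n y t + 1"
  using assms unfolding ytilde_def by simp

lemma yt_step:
  assumes n: "n \<ge> 1" and ys: "\<And>i j. i \<le> j \<Longrightarrow> j < n \<Longrightarrow> y i \<le> y j"
    and yw: "y (n - 1) \<le> y 0 + 1"
  shows "ytilde n y t \<le> ytilde n y (t + 1)"
proof -
  define r where "r = nat (t mod int n)"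
  define q where "q = t div int n"
  have t: "t = int r + int n * q" and r: "r < n" using yt_decomp[OF n, of t] by (auto simp: r_def q_def)
  show ?thesis
  proof (cases "r + 1 < n")
    case True
    have e: "t + 1 = int (r+1) + int n * q" using t by simp
    have "ytilde n y (t+1) = y (r+1) + of_int q" unfolding e by (rule yt_formula[OF True])
    moreover have "ytilde n y t = y r + of_int q" using yt_formula[OF r] t by simp
    ultimately show ?thesis using ys[of r "r+1"] True by simp
  next
    case False
    then have rn: "r = n - 1" using r by simp
    have e: "t + 1 = int 0 + int n * (q+1)" using t rn n by (simp add: algebra_simps)
    have "ytilde n y (t+1) = y 0 + of_int (q + 1)" unfolding e using n by (intro yt_formula) simp
    then have "ytilde n y (t+1) = y 0 + of_int q + 1" by simp
    moreover have "ytilde n y t = y (n-1) + of_int q" using yt_formula[OF r] t rn by simp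
    ultimately show ?thesis using yw by simp
  qed
qed

lemma int_step_mono:
  fixes Y :: "int \<Rightarrow> real"
  assumes "\<And>t. Y t \<le> Y (t+1)" "a \<le> b" shows "Y a \<le> Y b"
proof -
  define k where "k = nat (b - a)"
  have b: "b = a + int k" using assms(2) by (simp add: k_def)
  have "Y a \<le> Y (a + int k)"
  proof (induction k)
    case 0 then show ?case by simp
  next
    case (Suc k)
    then show ?case using assms(1)[of "a + int k"] by (simp add: ac_simps)
  qed
  then show ?thesis using b by simp
qed

lemma sum_two:
  fixes h h' :: "nat \<Rightarrow> 'a::ab_group_add"
  assumes "i<n" "j<n" "i\<noteq>j" "\<And>k. k\<noteq>i \<Longrightarrow> k\<noteq>j \<Longrightarrow> h' k = h k"
  shows "sum h' {..<n} = sum h {..<n} - h i - h j + h' i + h' j"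
proof -
  have S: "\<And>h. sum h {..<n} = h i + h j + sum h ({..<n} - {i} - {j})"
    using assms by (simp add: sum.remove[of "{..<n}" i] sum.remove[of "{..<n} - {i}" j] algebra_simps)
  have r: "sum h' ({..<n} - {i} - {j}) = sum h ({..<n} - {i} - {j})"
    by (rule sum.cong) (auto simp: assms)
  show ?thesis using S[of h] S[of h'] r by (simp add: algebra_simps)
qed

lemma mono_consec:
  fixes m :: "nat \<Rightarrow> int"
  assumes n: "n \<ge> 1" and inc: "\<And>i. i + 1 < n \<Longrightarrow> m i < m (i+1)" and w: "m (n-1) < m 0 + int n"
  shows "\<And>i. i < n \<Longrightarrow> m i = m 0 + int i"
proof -
  have lo: "i < n \<Longrightarrow> m 0 + int i \<le> m i" for i
  proof (induction i)
    case 0 then show ?case by simp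
  next
    case (Suc i) then show ?case using inc[of i] by simp
  qed
  have hi: "k \<le> n - 1 \<Longrightarrow> m (n - 1 - k) + int k \<le> m (n-1)" for k
  proof (induction k)
    case 0 then show ?case by simp
  next
    case (Suc k)
    then have "n - 1 - Suc k + 1 = n - 1 - k" "n - 1 - Suc k + 1 < n" by auto
    then have "m (n - 1 - Suc k) < m (n - 1 - k)" using inc[of "n - 1 - Suc k"] by metis
    then show ?case using Suc by simp
  qed
  fix i assume i: "i < n"
  have "m (n - 1 - (n-1-i)) + int (n-1-i) \<le> m (n-1)" using hi[of "n-1-i"] by simp
  moreover have "n - 1 - (n-1-i) = i" using i by simp
  ultimately have "m i + int (n-1-i) \<le> m (n-1)" by simp
  moreover have "int (n-1-i) = int n - 1 - int i" using i by simp
  ultimately show "m i = m 0 + int i" using lo[OF i] w by simp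
qed

lemma window:
  fixes v :: "nat \<Rightarrow> real" and Y :: "int \<Rightarrow> real" and m :: "nat \<Rightarrow> int"
  assumes p: "1 \<le> p" and n: "n \<ge> 1"
   and Ymono: "\<And>a b. a \<le> b \<Longrightarrow> Y a \<le> Y b" and Yper: "\<And>t. Y (t + int n) = Y t + 1"
   and vs: "\<And>i j. i \<le> j \<Longrightarrow> j < n \<Longrightarrow> v i \<le> v j" and vspan: "v (n-1) \<le> v 0 + 1"
  shows "(\<And>i j. i < n \<Longrightarrow> j < n \<Longrightarrow> i \<noteq> j \<Longrightarrow> m i mod int n \<noteq> m j mod int n) \<Longrightarrow>
    \<exists>s. lp_norm p n (\<lambda>i. v i - Y (s + int i)) \<le> lp_norm p n (\<lambda>i. v i - Y (m i))"
proof (induction "nat (\<Sum>k<n. (m k - int k)^2)" arbitrary: m rule: less_induct)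
  case less
  note res = less.prems
  define D where "D = (\<lambda>m::nat\<Rightarrow>int. (\<Sum>k<n. (m k - int k)^2))"
  have Dnn: "0 \<le> D m'" for m' unfolding D_def by (intro sum_nonneg) auto
  show ?case
  proof (cases "(\<forall>i. i + 1 < n \<longrightarrow> m i < m (i+1)) \<and> m (n-1) < m 0 + int n")
    case True
    have eq: "\<And>i. i < n \<Longrightarrow> m 0 + int i = m i" using mono_consec[OF n, of m] True by metis
    have "lp_norm p n (\<lambda>i. v i - Y (m 0 + int i)) = lp_norm p n (\<lambda>i. v i - Y (m i))"
      by (rule lp_norm_cong) (simp only: eq)
    then show ?thesis by (intro exI[of _ "m 0"]) simp
  next
    case False
    then consider (desc) i where "i + 1 < n" "m (i+1) < m i" | (wrap) "m 0 + int n < m (n-1)"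
    proof -
      assume d: "\<And>i. i + 1 < n \<Longrightarrow> m (i + 1) < m i \<Longrightarrow> thesis" and wr: "m 0 + int n < m (n - 1) \<Longrightarrow> thesis"
      show thesis
      proof (cases "\<forall>i. i + 1 < n \<longrightarrow> m i < m (i+1)")
        case True
        then have ge: "m 0 + int n \<le> m (n-1)" using False by auto
        have "n - 1 \<noteq> 0"
        proof
          assume "n - 1 = 0" then have "n = 1" using n by simp
          then show False using ge by simp
        qed
        then have "m (n-1) mod int n \<noteq> m 0 mod int n" using res[of "n-1" 0] n by simp
        then have "m (n-1) \<noteq> m 0 + int n" by auto
        then show thesis using wr ge by simp
      next
        case False
        then obtain i where i: "i + 1 < n" "m (i+1) \<le> m i" by auto
        then have "m i mod int n \<noteq> m (i+1) mod int n" using res[of i "i+1"] by simp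
        then have "m (i+1) \<noteq> m i" by auto
        then show thesis using d i by simp
      qed
    qed
    then show ?thesis
    proof cases
      case (desc i)
      define m' where "m' = m(i := m (i+1), i+1 := m i)"
      have m'i: "m' i = m (i+1)" "m' (i+1) = m i" "\<And>k. k \<noteq> i \<Longrightarrow> k \<noteq> i+1 \<Longrightarrow> m' k = m k"
        by (auto simp: m'_def)
      have Dlt: "D m' < D m"
      proof -
        have "D m' = D m - (m i - int i)^2 - (m (i+1) - int (i+1))^2 + (m' i - int i)^2 + (m' (i+1) - int (i+1))^2"
          unfolding D_def using desc m'i by (intro sum_two) auto
        moreover have "(m (i+1) - int i)^2 + (m i - int (i+1))^2 < (m i - int i)^2 + (m (i+1) - int (i+1))^2"
          using desc by (simp add: power2_eq_square algebra_simps)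
        ultimately show ?thesis using m'i by simp
      qed
      have res': "m' a mod int n \<noteq> m' b mod int n" if "a < n" "b < n" "a \<noteq> b" for a b
      proof -
        define \<tau> where "\<tau> = (\<lambda>k. if k = i then i+1 else if k = i+1 then i else k)"
        have "\<And>k. m' k = m (\<tau> k)" by (auto simp: m'_def \<tau>_def)
        moreover have "\<tau> a < n" "\<tau> b < n" "\<tau> a \<noteq> \<tau> b" using that desc by (auto simp: \<tau>_def)
        ultimately show ?thesis using res by metis
      qed
      have "nat (D m') < nat (D m)" using Dlt Dnn[of m'] by simp
      then obtain s where s: "lp_norm p n (\<lambda>i. v i - Y (s + int i)) \<le> lp_norm p n (\<lambda>i. v i - Y (m' i))"
        using less.hyps[of m'] res' unfolding D_def by blast
      have "lp_norm p n (\<lambda>i. v i - Y (m' i)) \<le> lp_norm p n (\<lambda>i. v i - Y (m i))"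
        apply (rule lp_swap[OF p, where i=i and j="i+1" and aa="v i" and bb="v (i+1)" and A="Y (m i)" and B="Y (m (i+1))"])
        using desc m'i vs[of i "i+1"] Ymono[of "m (i+1)" "m i"] by auto
      then show ?thesis using order_trans[OF s] by blast
    next
      case wrap
      have n2: "n - 1 \<noteq> 0" using wrap by (cases "n - 1") auto
      define m' where "m' = m(0 := m (n-1) - int n, n-1 := m 0 + int n)"
      have m'i: "m' 0 = m (n-1) - int n" "m' (n-1) = m 0 + int n" "\<And>k. k \<noteq> 0 \<Longrightarrow> k \<noteq> n-1 \<Longrightarrow> m' k = m k"
        using n2 by (auto simp: m'_def)
      have Dlt: "D m' < D m"
      proof -
        have "D m' = D m - (m (n-1) - int (n-1))^2 - (m 0 - int 0)^2 + (m' (n-1) - int (n-1))^2 + (m' 0 - int 0)^2"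
          unfolding D_def using n n2 m'i by (intro sum_two) auto
        moreover have "int (n-1) = int n - 1" using n by simp
        moreover have "(m 0 + int n - (int n - 1))^2 + (m (n-1) - int n)^2 < (m (n-1) - (int n - 1))^2 + (m 0)^2"
          using wrap by (simp add: power2_eq_square algebra_simps)
        ultimately show ?thesis using m'i by simp
      qed
      have res': "m' a mod int n \<noteq> m' b mod int n" if "a < n" "b < n" "a \<noteq> b" for a b
      proof -
        define \<tau> where "\<tau> = (\<lambda>k. if k = 0 then n-1 else if k = n-1 then 0 else k)"
        have "\<And>k. m' k mod int n = m (\<tau> k) mod int n" using n2 by (auto simp: m'_def \<tau>_def)
        moreover have "\<tau> a < n" "\<tau> b < n" "\<tau> a \<noteq> \<tau> b" using that n2 by (auto simp: \<tau>_def)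
        ultimately show ?thesis using res by metis
      qed
      have "nat (D m') < nat (D m)" using Dlt Dnn[of m'] by simp
      then obtain s where s: "lp_norm p n (\<lambda>i. v i - Y (s + int i)) \<le> lp_norm p n (\<lambda>i. v i - Y (m' i))"
        using less.hyps[of m'] res' unfolding D_def by blast
      have Y1: "Y (m 0 + int n) = Y (m 0) + 1" by (rule Yper)
      have Y2: "Y (m (n-1)) = Y (m (n-1) - int n) + 1" using Yper[of "m (n-1) - int n"] by simp
      have "lp_norm p n (\<lambda>i. v i - Y (m' i)) \<le> lp_norm p n (\<lambda>i. v i - Y (m i))"
        apply (rule lp_swap[OF p, where i="n-1" and j=0 and aa="v (n-1)" and bb="v 0 + 1" and A="Y (m (n-1))" and B="Y (m 0 + int n)"])
        using n n2 m'i vspan Ymono[of "m 0 + int n" "m (n-1)"] wrap Y1 Y2 by auto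
      then show ?thesis using order_trans[OF s] by blast
    qed
  qed
qed

lemma cd_le: "circ_dist a b \<le> \<bar>a - b + of_int K\<bar>"
proof (cases "K = 0")
  case True then show ?thesis by (simp add: circ_dist_def)
next
  case False
  then have "\<bar>real_of_int K\<bar> \<ge> 1" by linarith
  then have "\<bar>a - b + of_int K\<bar> \<ge> 1 - \<bar>a - b\<bar>" by linarith
  then show ?thesis unfolding circ_dist_def by linarith
qed

lemma cd_nonneg: assumes "0 \<le> a" "a < 1" "0 \<le> b" "b < 1" shows "0 \<le> circ_dist a b"
  using assms unfolding circ_dist_def by auto

lemma cd_eq: assumes "0 \<le> a" "a < 1" "0 \<le> b" "b < 1"
  shows "\<exists>K::int. circ_dist a b = \<bar>a - b + of_int K\<bar>"
proof (cases "\<bar>a - b\<bar> \<le> 1 - \<bar>a - b\<bar>")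
  case True
  then show ?thesis unfolding circ_dist_def by (intro exI[of _ 0]) simp
next
  case False
  show ?thesis
  proof (cases "a \<ge> b")
    case True
    then show ?thesis using False assms unfolding circ_dist_def by (intro exI[of _ "-1"]) auto
  next
    case nb: False
    then show ?thesis using False assms unfolding circ_dist_def by (intro exI[of _ 1]) auto
  qed
qed

lemma idx_eq:
  assumes "n \<ge> 1" shows "nat ((int i + s') mod int n) = (i + nat (s' mod int n)) mod n"
proof -
  have n: "int n > 0" using assms by simp
  have "int ((i + nat (s' mod int n)) mod n) = (int i + s' mod int n) mod int n"
    using n by (simp add: zmod_int)
  also have "\<dots> = (int i + s') mod int n" by (simp add: mod_add_right_eq)
  finally show ?thesis by simp
qed

lemma res_distinct:
  fixes i j s n :: nat
  assumes "i < n" "j < n" "i \<noteq> j" shows "(i + s) mod n \<noteq> (j + s) mod n"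
proof
  assume h: "(i + s) mod n = (j + s) mod n"
  then have "int ((i + s) mod n) = int ((j + s) mod n)" by simp
  then have "(int i + int s) mod int n = (int j + int s) mod int n" by (simp add: zmod_int)
  then have "int n dvd (int i + int s) - (int j + int s)" by (simp add: mod_eq_dvd_iff)
  then have "int n dvd int i - int j" by simp
  then obtain k where k: "int i - int j = int n * k" by (auto simp: dvd_def)
  show False
  proof (cases "k = 0")
    case True then show False using k assms by simp
  next
    case False
    then have "\<bar>k\<bar> \<ge> 1" by linarith
    then have "int n * 1 \<le> int n * \<bar>k\<bar>" by (intro mult_left_mono) auto
    then have "\<bar>int n * k\<bar> \<ge> int n" by (simp add: abs_mult)
    then show False using k assms by linarith
  qed
qed

theorem mainTheorem1:
  fixes n :: nat and p :: ereal and x y :: "nat \<Rightarrow> real"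
  assumes "n \<ge> 1"
    and "1 \<le> p"
    and "0 \<le> x 0" and "\<forall>i j. i \<le> j \<and> j < n \<longrightarrow> x i \<le> x j" and "x (n - 1) < 1"
    and "0 \<le> y 0" and "\<forall>i j. i \<le> j \<and> j < n \<longrightarrow> y i \<le> y j" and "y (n - 1) < 1"
  shows "(INF cs \<in> {0..<(1::real)} \<times> {0..<n}.
            lp_norm p n (\<lambda>i. circ_dist (frac (x i + fst cs)) (y ((i + snd cs) mod n))))
       = (INF cs \<in> (UNIV :: real set) \<times> (UNIV :: int set).
            lp_norm p n (\<lambda>i. \<bar>x i + fst cs - ytilde n y (int i + snd cs)\<bar>))"
proof -
  note n = assms(1) and p = assms(2)
  define C where "C = (\<lambda>cs::real\<times>nat. lp_norm p n (\<lambda>i. circ_dist (frac (x i + fst cs)) (y ((i + snd cs) mod n))))"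
  define L where "L = (\<lambda>cs::real\<times>int. lp_norm p n (\<lambda>i. \<bar>x i + fst cs - ytilde n y (int i + snd cs)\<bar>))"
  define A where "A = {0..<(1::real)} \<times> {0..<n}"
  define B where "B = (UNIV :: real set) \<times> (UNIV :: int set)"
  have xs: "\<And>i j. i \<le> j \<Longrightarrow> j < n \<Longrightarrow> x i \<le> x j" using assms(4) by blast
  have ys: "\<And>i j. i \<le> j \<Longrightarrow> j < n \<Longrightarrow> y i \<le> y j" using assms(7) by blast
  have y01: "0 \<le> y j \<and> y j < 1" if "j < n" for j
  proof -
    have "j \<le> n - 1" "n - 1 < n" using that by auto
    then show ?thesis using ys[of 0 j] ys[of j "n-1"] that assms(6,8) by auto
  qed
  have bddC: "bdd_below (C ` A)" unfolding C_def using lp_norm_nonneg[OF n] by (intro bdd_belowI[of _ 0]) auto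
  have bddL: "bdd_below (L ` B)" unfolding L_def using lp_norm_nonneg[OF n] by (intro bdd_belowI[of _ 0]) auto
  have neA: "A \<noteq> {}" using n unfolding A_def by auto
  have neB: "B \<noteq> {}" unfolding B_def by auto
  have Ystep: "\<And>t. ytilde n y t \<le> ytilde n y (t + 1)"
    using yt_step[OF n ys] assms(6,8) by simp
  have Ymono: "\<And>a b. a \<le> b \<Longrightarrow> ytilde n y a \<le> ytilde n y b"
    using int_step_mono[of "ytilde n y", OF Ystep] by blast
  have Yper: "\<And>t. ytilde n y (t + int n) = ytilde n y t + 1" using yt_period[OF n] by blast

  have one: "\<exists>ds\<in>A. C ds \<le> L cs" if "cs \<in> B" for cs
  proof -
    obtain c' s' where cs: "cs = (c', s')" by (cases cs)
    define ds where "ds = (frac c', nat (s' mod int n))"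
    have "ds \<in> A" unfolding ds_def A_def using n by (auto simp: frac_lt_1 nat_less_iff)
    moreover have "C ds \<le> L cs"
      unfolding C_def L_def cs ds_def fst_conv snd_conv
    proof (rule lp_norm_mono[OF p])
      fix i assume i: "i < n"
      define r where "r = (i + nat (s' mod int n)) mod n"
      have r: "r < n" using n by (simp add: r_def)
      define K where "K = \<lfloor>x i + c'\<rfloor> - (int i + s') div int n"
      have Yv: "ytilde n y (int i + s') = y r + of_int ((int i + s') div int n)"
        unfolding ytilde_def r_def using idx_eq[OF n] by simp
      have e: "x i + c' - ytilde n y (int i + s') = frac (x i + c') - y r + of_int K"
        unfolding Yv K_def frac_def by simp
      have "0 \<le> circ_dist (frac (x i + c')) (y r)"
        using y01[OF r] by (intro cd_nonneg) (auto simp: frac_lt_1)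
      then show "\<bar>circ_dist (frac (x i + frac c')) (y ((i + nat (s' mod int n)) mod n))\<bar>
          \<le> \<bar>\<bar>x i + c' - ytilde n y (int i + s')\<bar>\<bar>"
        unfolding e using cd_le[of "frac (x i + c')" "y r" K] by (simp add: r_def)
    qed
    ultimately show ?thesis by blast
  qed

  have two: "\<exists>cs\<in>B. L cs \<le> C ds" if "ds \<in> A" for ds
  proof -
    obtain c s where ds: "ds = (c, s)" by (cases ds)
    have c: "0 \<le> c" "c < 1" and s: "s < n" using that unfolding ds A_def by auto
    define v where "v = (\<lambda>i. x i + c)"
    define r where "r = (\<lambda>i. (i + s) mod n)"
    have rn: "r i < n" for i using n by (simp add: r_def)
    have "\<forall>i. \<exists>K::int. circ_dist (frac (v i)) (y (r i)) = \<bar>frac (v i) - y (r i) + of_int K\<bar>"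
      using y01[OF rn] by (intro allI cd_eq) (auto simp: frac_lt_1)
    then obtain K where K: "\<And>i. circ_dist (frac (v i)) (y (r i)) = \<bar>frac (v i) - y (r i) + of_int (K i)\<bar>"
      by metis
    define m where "m = (\<lambda>i. int (r i) + int n * (\<lfloor>v i\<rfloor> - K i))"
    have Ym: "ytilde n y (m i) = y (r i) + of_int (\<lfloor>v i\<rfloor> - K i)" for i
      unfolding m_def by (rule yt_formula[OF rn])
    have cm: "circ_dist (frac (v i)) (y (r i)) = \<bar>v i - ytilde n y (m i)\<bar>" for i
    proof -
      have "v i - ytilde n y (m i) = frac (v i) - y (r i) + of_int (K i)"
        unfolding Ym frac_def by simp
      then show ?thesis using K[of i] by simp
    qed
    have mmod: "m i mod int n = int (r i)" for i
      unfolding m_def using rn[of i] by simp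
    have res: "\<And>i j. i < n \<Longrightarrow> j < n \<Longrightarrow> i \<noteq> j \<Longrightarrow> m i mod int n \<noteq> m j mod int n"
      unfolding mmod r_def using res_distinct by simp
    have vs: "\<And>i j. i \<le> j \<Longrightarrow> j < n \<Longrightarrow> v i \<le> v j" unfolding v_def using xs by simp
    have vspan: "v (n-1) \<le> v 0 + 1" unfolding v_def using assms(3,5) by simp
    obtain s' where s': "lp_norm p n (\<lambda>i. v i - ytilde n y (s' + int i)) \<le> lp_norm p n (\<lambda>i. v i - ytilde n y (m i))"
      using window[where Y="ytilde n y" and v=v and m=m, OF p n Ymono Yper vs vspan res] by blast
    have "L (c, s') = lp_norm p n (\<lambda>i. v i - ytilde n y (s' + int i))"
      unfolding L_def v_def by (rule lp_norm_cong) (simp add: add.commute)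
    moreover have "lp_norm p n (\<lambda>i. v i - ytilde n y (m i)) = C ds"
      unfolding C_def ds fst_conv snd_conv
      by (rule lp_norm_cong) (use cm in \<open>simp add: v_def r_def\<close>)
    ultimately have "L (c, s') \<le> C ds" using s' by simp
    then show ?thesis unfolding B_def by blast
  qed

  have le1: "Inf (C ` A) \<le> Inf (L ` B)"
  proof (rule cINF_greatest[OF neB])
    fix cs assume "cs \<in> B"
    then obtain ds where "ds \<in> A" "C ds \<le> L cs" using one by blast
    then show "Inf (C ` A) \<le> L cs" using cINF_lower[OF bddC, of ds] by linarith
  qed
  have le2: "Inf (L ` B) \<le> Inf (C ` A)"
  proof (rule cINF_greatest[OF neA])
    fix ds assume "ds \<in> A"
    then obtain cs where "cs \<in> B" "L cs \<le> C ds" using two by blast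
    then show "Inf (L ` B) \<le> C ds" using cINF_lower[OF bddL, of cs] by linarith
  qed
  from le1 le2 show ?thesis unfolding C_def L_def A_def B_def by simp
qed
end
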